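(* Let $d\ge2$ and $\overrightarrow{w}\in(0,\infty)^d$ with $w_1=\max\{w_1,\dots,w_d\}$ and $2w_1>\sum_{i=1}^dw_i$. Then for every random vector $\overrightarrow{U}=(U_1,\dots,U_d)$ with uniform$[0,1]$ marginals, $$l(\overrightarrow{w})\le\mathrm{Var}\left(\sum_{i=1}^dw_iU_i\right),$$ with equality if and only if $\overrightarrow{U}$ is $\overrightarrow{w^*}$-CM. Moreover, there exists such a $\overrightarrow{U}$ attaining equality.
   Context: A random vector $\overrightarrow{U}=(U_1,\dots,U_d)$ with each $U_i$ uniform on $[0,1]$ is $\overrightarrow{v}$-CM (for $\overrightarrow{v}\in(0,\infty)^d$) if $P\left(\sum_{i=1}^d v_iU_i=\frac12\sum_{i=1}^d v_i\right)=1$. For $\overrightarrow{w}\in(0,\infty)^d$, define $\overrightarrow{w^*}=(w_1^*,\dots,w_d^* )$ by $w_i^*=w_i$ if $2w_i\le\sum_{j=1}^dw_j$ and $w_i^*=\sum_{j=1}^dw_j-w_i$ if $2w_i>\sum_{j=1}^dw_j$; and define $l(\overrightarrow{w})=\frac1{12}\left[\left(2\max\{w_1,\dots,w_d\}-\sum_{i=1}^dw_i\right)_+\right]^2$, where $x_+=\max\{x,0\}$. *)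

theory Defs
  imports "HOL-Probability.Probability"
begin

text \<open>Vectors in (0,oo)^d are represented as functions nat => real, components
  indexed 0..d-1 (so w_1 of the paper is w 0).\<close>

definition unif01 :: "'a measure \<Rightarrow> ('a \<Rightarrow> real) \<Rightarrow> bool" where
  "unif01 M X \<longleftrightarrow> X \<in> borel_measurable M \<and>
     distr M borel X = uniform_measure lborel {0..1}"

definition is_CM :: "'a measure \<Rightarrow> nat \<Rightarrow> (nat \<Rightarrow> real) \<Rightarrow> (nat \<Rightarrow> 'a \<Rightarrow> real) \<Rightarrow> bool" where
  "is_CM M d v U \<longleftrightarrow>
     measure M {x \<in> space M. (\<Sum>i<d. v i * U i x) = (1/2) * (\<Sum>i<d. v i)} = 1"

definition wstar :: "nat \<Rightarrow> (nat \<Rightarrow> real) \<Rightarrow> nat \<Rightarrow> real" where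
  "wstar d w i = (if 2 * w i \<le> (\<Sum>j<d. w j) then w i else (\<Sum>j<d. w j) - w i)"

definition l_fun :: "nat \<Rightarrow> (nat \<Rightarrow> real) \<Rightarrow> real" where
  "l_fun d w = (1/12) * (max (2 * Max (w ` {..<d}) - (\<Sum>i<d. w i)) 0)^2"

end

theory Submission imports Defs begin

lemma unif01_distributed:
  assumes P: "prob_space M" and U: "unif01 M X"
  shows "distributed M lborel X (\<lambda>x. ennreal (indicator {0..1::real} x / measure lborel {0..1::real}))"
proof -
  have Xm[measurable]: "X \<in> borel_measurable M" using U unfolding unif01_def by blast
  have "distr M lborel X = distr M borel X" by (rule distr_cong) auto
  also have "\<dots> = uniform_measure lborel {0..1}" using U unfolding unif01_def by blast
  also have "\<dots> = density lborel (\<lambda>x. ennreal (indicator {0..1::real} x / measure lborel {0..1::real}))"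
    unfolding uniform_measure_def by (intro density_cong) (auto split: split_indicator)
  finally show ?thesis unfolding distributed_def by auto
qed

lemma unif01_facts:
  assumes P: "prob_space M" and U: "unif01 M X"
  shows "X \<in> borel_measurable M" "AE x in M. 0 \<le> X x \<and> X x \<le> 1"
    "prob_space.expectation M X = 1/2" "prob_space.expectation M (\<lambda>x. (X x)^2) = 1/3"
    "integrable M X" "integrable M (\<lambda>x. (X x)^2)"
proof -
  interpret prob_space M by fact
  show Xm[measurable]: "X \<in> borel_measurable M" using U unfolding unif01_def by blast
  have D: "distributed M lborel X (\<lambda>x. ennreal (indicator {0..1::real} x / measure lborel {0..1::real}))"
    by (rule unif01_distributed[OF P U])
  have "AE x in uniform_measure lborel {0..1::real}. x \<in> {0..1}"
    by (intro AE_uniform_measureI) auto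
  moreover have "distr M borel X = uniform_measure lborel {0..1}" using U unfolding unif01_def by blast
  ultimately have "AE x in distr M borel X. x \<in> {0..1}" by metis
  then show AE: "AE x in M. 0 \<le> X x \<and> X x \<le> 1" by (subst (asm) AE_distr_iff) auto
  show E: "expectation X = 1/2" using uniform_distributed_expectation[OF D] by simp
  have V: "variance X = 1/12" using uniform_distributed_variance[OF D] by simp
  show I1: "integrable M X"
    by (rule integrable_const_bound[where B=1]) (use AE in auto)
  show I2: "integrable M (\<lambda>x. (X x)^2)"
    by (rule integrable_const_bound[where B=1]) (use AE in \<open>auto simp: abs_square_le_1\<close>)
  show "expectation (\<lambda>x. (X x)^2) = 1/3" using variance_eq[OF I1 I2] V E by (simp add: power2_eq_square)
qed

lemma intb:
  fixes f :: "'a \<Rightarrow> real"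
  assumes "prob_space M" "f \<in> borel_measurable M" "AE x in M. \<bar>f x\<bar> \<le> B"
  shows "integrable M f"
proof -
  interpret prob_space M by fact
  show ?thesis by (rule integrable_const_bound[where B=B]) (use assms in auto)
qed

lemma sum_split0:
  assumes "d \<ge> (1::nat)"
  shows "(\<Sum>i<d. f i) = f 0 + (\<Sum>i\<in>{1..<d}. f i)"
proof -
  have "{..<d} = insert 0 {1..<d}" using assms by auto
  then show ?thesis by simp
qed

lemma core:
  fixes M :: "'a measure" and U :: "nat \<Rightarrow> 'a \<Rightarrow> real" and w :: "nat \<Rightarrow> real" and d :: nat
  assumes P: "prob_space M" and d: "d \<ge> 2" and wpos: "\<forall>i<d. w i > 0"
    and U: "\<forall>i<d. unif01 M (U i)"
    and b_def: "b = (\<Sum>i\<in>{1..<d}. w i)"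
    and Y_def: "Y = (\<lambda>x. b * U 0 x + (\<Sum>i\<in>{1..<d}. w i * U i x) - b)"
    and V_def: "V = (\<lambda>x. U 0 x - 1/2)"
  shows "prob_space.variance M (\<lambda>x. \<Sum>i<d. w i * U i x) =
           (w 0 - b)^2/12 + prob_space.expectation M (\<lambda>x. (Y x)^2)
             + 2*(w 0 - b) * prob_space.expectation M (\<lambda>x. V x * Y x)"
    and "prob_space.expectation M (\<lambda>x. V x * Y x) \<ge> 0"
    and "integrable M (\<lambda>x. (Y x)^2)" and "Y \<in> borel_measurable M"
    and "integrable M (\<lambda>x. V x * Y x)"
proof -
  interpret prob_space M by fact
  have ps1[simp]: "prob (space M) = 1" by (rule prob_space)
  have Um: "\<And>i. i<d \<Longrightarrow> U i \<in> borel_measurable M" using U unif01_facts[OF P] by blast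
  have AEi: "\<And>i. i<d \<Longrightarrow> AE x in M. 0 \<le> U i x \<and> U i x \<le> 1" using U unif01_facts[OF P] by blast
  have EU: "\<And>i. i<d \<Longrightarrow> expectation (U i) = 1/2" using U unif01_facts[OF P] by blast
  have EU2: "\<And>i. i<d \<Longrightarrow> expectation (\<lambda>x. (U i x)^2) = 1/3" using U unif01_facts[OF P] by blast
  have IU: "\<And>i. i<d \<Longrightarrow> integrable M (U i)" using U unif01_facts[OF P] by blast
  have IU2: "\<And>i. i<d \<Longrightarrow> integrable M (\<lambda>x. (U i x)^2)" using U unif01_facts[OF P] by blast
  have AEb: "AE x in M. \<forall>i\<in>{..<d}. 0 \<le> U i x \<and> U i x \<le> 1"
    by (rule AE_finite_allI) (use AEi in auto)
  have d0: "0 < d" using d by auto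
  have U0m[measurable]: "U 0 \<in> borel_measurable M" using Um d0 by blast
  have IU0: "integrable M (U 0)" using IU d0 by blast
  have IUU: "\<And>i j. i<d \<Longrightarrow> j<d \<Longrightarrow> integrable M (\<lambda>x. U i x * U j x)"
  proof -
    fix i j assume ij: "i<d" "j<d"
    show "integrable M (\<lambda>x. U i x * U j x)"
    proof (rule intb[OF P, where B=1])
      show "(\<lambda>x. U i x * U j x) \<in> borel_measurable M" using Um ij by (intro borel_measurable_times) auto
      show "AE x in M. \<bar>U i x * U j x\<bar> \<le> 1" using AEb
        by eventually_elim (use ij in \<open>auto simp: abs_mult intro!: mult_le_one\<close>)
    qed
  qed
  define T where "T = (\<lambda>x. \<Sum>i\<in>{1..<d}. w i * U i x)"
  have Tm[measurable]: "T \<in> borel_measurable M" unfolding T_def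
    by (intro borel_measurable_sum borel_measurable_times) (use Um in auto)
  have IT: "integrable M T" unfolding T_def using IU by (intro Bochner_Integration.integrable_sum Bochner_Integration.integrable_mult_right) auto
  have ET: "expectation T = b/2" unfolding T_def b_def
    by (subst Bochner_Integration.integral_sum) (use IU EU in \<open>auto simp: sum_divide_distrib intro!: sum.cong\<close>)
  have AET: "AE x in M. 0 \<le> T x \<and> T x \<le> b" using AEb
  proof eventually_elim
    case (elim x)
    have "0 \<le> T x" unfolding T_def using elim wpos by (intro sum_nonneg) auto
    moreover have "T x \<le> b" unfolding T_def b_def using elim wpos
      by (intro sum_mono) (auto intro!: mult_le_one[where b=1, simplified] simp: mult_le_cancel_left1)
    ultimately show ?case by auto
  qed
  have Zeq: "(\<lambda>x. \<Sum>i<d. w i * U i x) = (\<lambda>x. w 0 * U 0 x + T x)"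
    unfolding T_def using sum_split0[of d] d0 by auto
  have EZ: "expectation (\<lambda>x. \<Sum>i<d. w i * U i x) = (w 0 + b)/2"
    unfolding Zeq using IT IU0 EU[OF d0] ET by simp
  have YT: "Y = (\<lambda>x. b * U 0 x + T x - b)" unfolding Y_def T_def by simp
  have Ym[measurable]: "Y \<in> borel_measurable M" unfolding YT by measurable
  show "Y \<in> borel_measurable M" by (rule Ym)
  have AEY: "AE x in M. \<bar>Y x\<bar> \<le> b" using AET AEb
  proof eventually_elim
    case (elim x)
    then have "0 \<le> U 0 x" "U 0 x \<le> 1" using d0 by auto
    moreover have "0 \<le> b" using elim by auto
    ultimately have "0 \<le> b * U 0 x" "b * U 0 x \<le> b"
      by (auto intro: mult_left_le)
    then show ?case unfolding YT using elim by auto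
  qed
  have IY2: "integrable M (\<lambda>x. (Y x)^2)"
  proof (rule intb[OF P, where B="b^2"])
    show "(\<lambda>x. (Y x)^2) \<in> borel_measurable M" by measurable
    show "AE x in M. \<bar>(Y x)^2\<bar> \<le> b^2" using AEY
    proof eventually_elim
      case (elim x)
      then have "\<bar>Y x\<bar> \<le> \<bar>b\<bar>" by auto
      then have "(Y x)^2 \<le> b^2" by (simp only: abs_le_square_iff)
      then show ?case by simp
    qed
  qed
  then show "integrable M (\<lambda>x. (Y x)^2)" .
  have Vm[measurable]: "V \<in> borel_measurable M" unfolding V_def by measurable
  have IV: "integrable M V" unfolding V_def using IU0 by simp
  have EV: "expectation V = 0" unfolding V_def using IU0 EU[OF d0] by simp
  have IV2: "integrable M (\<lambda>x. (V x)^2)"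
  proof -
    have "(\<lambda>x. (V x)^2) = (\<lambda>x. (U 0 x)^2 - U 0 x + 1/4)"
      unfolding V_def by (auto simp: power2_eq_square algebra_simps)
    then show ?thesis using IU0 IU2[OF d0] by simp
  qed
  have EV2: "expectation (\<lambda>x. (V x)^2) = 1/12"
  proof -
    have "(\<lambda>x. (V x)^2) = (\<lambda>x. (U 0 x)^2 - U 0 x + 1/4)"
      unfolding V_def by (auto simp: power2_eq_square algebra_simps)
    then show ?thesis using IU0 IU2[OF d0] EU2[OF d0] EU[OF d0] by simp
  qed
  have VUeq: "\<And>i. (\<lambda>x. V x * U i x) = (\<lambda>x. U 0 x * U i x - U i x / 2)"
    unfolding V_def by (auto simp: algebra_simps)
  have IVU: "\<And>i. i<d \<Longrightarrow> integrable M (\<lambda>x. V x * U i x)"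
    unfolding VUeq using IUU IU d0 by auto
  have EVU: "\<And>i. i<d \<Longrightarrow> expectation (\<lambda>x. V x * U i x) = expectation (\<lambda>x. U 0 x * U i x) - 1/4"
  proof -
    fix i assume i: "i<d"
    have e: "expectation (U i) = 1/2" by (rule EU[OF i])
    show "expectation (\<lambda>x. V x * U i x) = expectation (\<lambda>x. U 0 x * U i x) - 1/4"
      unfolding VUeq using IUU[OF d0 i] IU[OF i] e by simp
  qed
  have EVU0: "expectation (\<lambda>x. V x * U 0 x) = 1/12"
    using EVU[OF d0] EU2[OF d0] by (simp add: power2_eq_square)
  have EVUi: "\<And>i. i<d \<Longrightarrow> expectation (\<lambda>x. V x * U i x) \<ge> -1/12"
  proof -
    fix i assume i: "i<d"
    have "0 \<le> expectation (\<lambda>x. (U 0 x + U i x - 1)^2)" by (rule Bochner_Integration.integral_nonneg) auto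
    also have "(\<lambda>x. (U 0 x + U i x - 1)^2) = (\<lambda>x. (U 0 x)^2 + (U i x)^2 + 2*(U 0 x * U i x) - 2*U 0 x - 2*U i x + 1)"
      by (auto simp: power2_eq_square algebra_simps)
    also have "expectation \<dots> = 1/3 + 1/3 + 2 * expectation (\<lambda>x. U 0 x * U i x) - 1 - 1 + 1"
      using IU2[OF d0] IU2[OF i] IUU[OF d0 i] IU0 IU[OF i] EU2[OF d0] EU2[OF i] EU[OF d0] EU[OF i]
      by simp
    finally show "expectation (\<lambda>x. V x * U i x) \<ge> -1/12" using EVU[OF i] by simp
  qed
  have VYeq: "(\<lambda>x. V x * Y x) = (\<lambda>x. b * (V x * U 0 x) - b * V x + (\<Sum>i\<in>{1..<d}. w i * (V x * U i x)))"
    unfolding Y_def by (auto simp: algebra_simps sum_distrib_left)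
  have ISVU: "integrable M (\<lambda>x. \<Sum>i\<in>{1..<d}. w i * (V x * U i x))"
    using IVU by (intro Bochner_Integration.integrable_sum Bochner_Integration.integrable_mult_right) auto
  have ESVU: "expectation (\<lambda>x. \<Sum>i\<in>{1..<d}. w i * (V x * U i x)) = (\<Sum>i\<in>{1..<d}. w i * expectation (\<lambda>x. V x * U i x))"
    by (subst Bochner_Integration.integral_sum) (use IVU in auto)
  also have "\<dots> \<ge> (\<Sum>i\<in>{1..<d}. w i * (-1/12))"
    using EVUi wpos by (intro sum_mono mult_left_mono) auto
  finally have ESVU': "expectation (\<lambda>x. \<Sum>i\<in>{1..<d}. w i * (V x * U i x)) \<ge> - b/12"
    unfolding b_def by (simp add: sum_negf sum_divide_distrib)
  show IVY: "integrable M (\<lambda>x. V x * Y x)" unfolding VYeq using IVU[OF d0] IV ISVU by simp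
  have EVY: "expectation (\<lambda>x. V x * Y x) = b/12 + expectation (\<lambda>x. \<Sum>i\<in>{1..<d}. w i * (V x * U i x))"
    unfolding VYeq using IVU[OF d0] IV ISVU EVU0 EV by simp
  show "expectation (\<lambda>x. V x * Y x) \<ge> 0" using EVY ESVU' by simp
  have Zc: "\<And>x. (\<Sum>i<d. w i * U i x) - (w 0 + b)/2 = (w 0 - b) * V x + Y x"
    using Zeq unfolding YT V_def by (auto simp: field_simps fun_eq_iff)
  have "variance (\<lambda>x. \<Sum>i<d. w i * U i x)
      = expectation (\<lambda>x. (w 0 - b)^2 * (V x)^2 + (Y x)^2 + 2*(w 0 - b) * (V x * Y x))"
    unfolding EZ Zc by (simp add: power2_eq_square algebra_simps)
  also have "\<dots> = (w 0 - b)^2/12 + expectation (\<lambda>x. (Y x)^2) + 2*(w 0 - b) * expectation (\<lambda>x. V x * Y x)"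
    using IV2 IY2 IVY EV2 by simp
  finally show "variance (\<lambda>x. \<Sum>i<d. w i * U i x) =
           (w 0 - b)^2/12 + expectation (\<lambda>x. (Y x)^2)
             + 2*(w 0 - b) * expectation (\<lambda>x. V x * Y x)" .
qed

lemma unif01I:
  assumes P: "prob_space M" and Xm: "X \<in> borel_measurable M"
    and F: "\<And>t. 0 \<le> t \<Longrightarrow> t \<le> 1 \<Longrightarrow> measure M {x\<in>space M. X x \<le> t} = t"
  shows "unif01 M X"
proof -
  interpret prob_space M by fact
  have D: "distributed M lborel X (\<lambda>x. indicator {0..1::real} x / measure lborel {0..1::real})"
    by (rule uniform_distrI_borel_atLeastAtMost) (use Xm F in auto)
  have "distr M borel X = distr M lborel X" by (rule distr_cong) auto
  also have "\<dots> = density lborel (\<lambda>x. ennreal (indicator {0..1::real} x / measure lborel {0..1::real}))"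
    using D unfolding distributed_def by blast
  also have "\<dots> = uniform_measure lborel {0..1}"
    unfolding uniform_measure_def by (intro density_cong) (auto split: split_indicator)
  finally show ?thesis unfolding unif01_def using Xm by blast
qed

lemma wfacts:
  fixes d :: nat and w :: "nat \<Rightarrow> real"
  assumes d: "d \<ge> 2"
    and wpos: "\<forall>i<d. w i > 0"
    and wmax: "\<forall>i<d. w i \<le> w 0"
    and big: "2 * w 0 > (\<Sum>i<d. w i)"
    and b_def: "b = (\<Sum>i\<in>{1..<d}. w i)"
  shows "(\<Sum>i<d. w i) = w 0 + b" "b < w 0" "0 < b"
    "l_fun d w = (w 0 - b)^2/12"
    "wstar d w 0 = b" "\<And>i. i \<in> {1..<d} \<Longrightarrow> wstar d w i = w i"
    "\<And>f. (\<Sum>i<d. wstar d w i * f i) = b * f 0 + (\<Sum>i\<in>{1..<d}. w i * f i)"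
    "(1/2) * (\<Sum>i<d. wstar d w i) = b"
proof -
  show S: "(\<Sum>i<d. w i) = w 0 + b" unfolding b_def by (rule sum_split0) (use d in auto)
  then show bw: "b < w 0" using big by simp
  show "0 < b" unfolding b_def using d wpos by (intro sum_pos) auto
  have Mx: "Max (w ` {..<d}) = w 0" using wmax d by (intro Max_eqI) auto
  show "l_fun d w = (w 0 - b)^2/12" unfolding l_fun_def Mx S using bw by (simp add: max_def)
  show w0: "wstar d w 0 = b" unfolding wstar_def S using bw by simp
  have wi: "\<And>i. i \<in> {1..<d} \<Longrightarrow> wstar d w i = w i"
  proof -
    fix i assume i: "i \<in> {1..<d}"
    have "w i \<le> b" unfolding b_def using i wpos by (intro member_le_sum) auto
    moreover have "w i \<le> w 0" using wmax i by auto
    ultimately show "wstar d w i = w i" unfolding wstar_def S by simp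
  qed
  then show "\<And>i. i \<in> {1..<d} \<Longrightarrow> wstar d w i = w i" .
  show "\<And>f. (\<Sum>i<d. wstar d w i * f i) = b * f 0 + (\<Sum>i\<in>{1..<d}. w i * f i)"
  proof -
    fix f :: "nat \<Rightarrow> real"
    have "(\<Sum>i<d. wstar d w i * f i) = wstar d w 0 * f 0 + (\<Sum>i\<in>{1..<d}. wstar d w i * f i)"
      by (rule sum_split0) (use d in auto)
    also have "(\<Sum>i\<in>{1..<d}. wstar d w i * f i) = (\<Sum>i\<in>{1..<d}. w i * f i)"
      using wi by (intro sum.cong) auto
    finally show "(\<Sum>i<d. wstar d w i * f i) = b * f 0 + (\<Sum>i\<in>{1..<d}. w i * f i)" using w0 by simp
  qed
  have "(\<Sum>i<d. wstar d w i) = wstar d w 0 + (\<Sum>i\<in>{1..<d}. wstar d w i)"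
    by (rule sum_split0) (use d in auto)
  also have "(\<Sum>i\<in>{1..<d}. wstar d w i) = b" unfolding b_def using wi by (intro sum.cong) auto
  finally have "(\<Sum>i<d. wstar d w i) = b + b" using w0 by simp
  then show "(1/2) * (\<Sum>i<d. wstar d w i) = b" by simp
qed


lemma part1:
  fixes d :: nat and w :: "nat \<Rightarrow> real" and M :: "'a measure" and U :: "nat \<Rightarrow> 'a \<Rightarrow> real"
  assumes d: "d \<ge> 2"
    and wpos: "\<forall>i<d. w i > 0"
    and wmax: "\<forall>i<d. w i \<le> w 0"
    and big: "2 * w 0 > (\<Sum>i<d. w i)"
    and P: "prob_space M" and U: "\<forall>i<d. unif01 M (U i)"
  shows "l_fun d w \<le> prob_space.variance M (\<lambda>x. \<Sum>i<d. w i * U i x) \<and>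
              (l_fun d w = prob_space.variance M (\<lambda>x. \<Sum>i<d. w i * U i x)
                 \<longleftrightarrow> is_CM M d (wstar d w) U)"
proof -
  interpret prob_space M by fact
  define b where "b = (\<Sum>i\<in>{1..<d}. w i)"
  define Y where "Y = (\<lambda>x. b * U 0 x + (\<Sum>i\<in>{1..<d}. w i * U i x) - b)"
  define V where "V = (\<lambda>x. U 0 x - 1/2)"
  note C = core[OF P d wpos U b_def Y_def V_def]
  note W = wfacts[OF d wpos wmax big b_def]
  have Ym[measurable]: "Y \<in> borel_measurable M" by (rule C(4))
  have A0: "0 \<le> expectation (\<lambda>x. (Y x)^2)" by (rule Bochner_Integration.integral_nonneg) simp
  have B0: "0 \<le> expectation (\<lambda>x. V x * Y x)" by (rule C(2))
  have wb: "0 < w 0 - b" using W(2) by simp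
  have var: "variance (\<lambda>x. \<Sum>i<d. w i * U i x) = l_fun d w + expectation (\<lambda>x. (Y x)^2)
             + 2*(w 0 - b) * expectation (\<lambda>x. V x * Y x)"
    using C(1) W(4) by simp
  have le: "l_fun d w \<le> variance (\<lambda>x. \<Sum>i<d. w i * U i x)"
    unfolding var using A0 B0 wb by simp
  have CM: "is_CM M d (wstar d w) U \<longleftrightarrow> (AE x in M. Y x = 0)"
  proof -
    have "{x \<in> space M. (\<Sum>i<d. wstar d w i * U i x) = 1 / 2 * (\<Sum>i<d. wstar d w i)}
          = {x \<in> space M. Y x = 0}"
      unfolding W(7) W(8) Y_def by auto
    moreover have "{x \<in> space M. Y x = 0} \<in> sets M" by measurable
    ultimately show ?thesis unfolding is_CM_def using prob_Collect_eq_1 by simp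
  qed
  have EQ: "l_fun d w = variance (\<lambda>x. \<Sum>i<d. w i * U i x) \<longleftrightarrow> (AE x in M. Y x = 0)"
  proof
    assume "l_fun d w = variance (\<lambda>x. \<Sum>i<d. w i * U i x)"
    then have "expectation (\<lambda>x. (Y x)^2) + 2*(w 0 - b) * expectation (\<lambda>x. V x * Y x) = 0"
      unfolding var by simp
    moreover have "0 \<le> 2*(w 0 - b) * expectation (\<lambda>x. V x * Y x)" using wb B0 by simp
    ultimately have "expectation (\<lambda>x. (Y x)^2) = 0" using A0 by linarith
    then have "AE x in M. (Y x)^2 = 0"
      using integral_nonneg_eq_0_iff_AE[OF C(3)] by simp
    then show "AE x in M. Y x = 0" by simp
  next
    assume ae: "AE x in M. Y x = 0"
    have "expectation (\<lambda>x. (Y x)^2) = 0" by (rule integral_eq_zero_AE) (use ae in auto)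
    moreover have "expectation (\<lambda>x. V x * Y x) = 0" by (rule integral_eq_zero_AE) (use ae in auto)
    ultimately show "l_fun d w = variance (\<lambda>x. \<Sum>i<d. w i * U i x)" unfolding var by simp
  qed
  show ?thesis using le EQ CM by simp
qed


lemma existence:
  fixes d :: nat and w :: "nat \<Rightarrow> real"
  assumes d: "d \<ge> 2"
    and wpos: "\<forall>i<d. w i > 0"
    and wmax: "\<forall>i<d. w i \<le> w 0"
    and big: "2 * w 0 > (\<Sum>i<d. w i)"
  shows "\<exists>(M :: real measure) (U :: nat \<Rightarrow> real \<Rightarrow> real).
            prob_space M \<and> (\<forall>i<d. unif01 M (U i)) \<and>
            l_fun d w = prob_space.variance M (\<lambda>x. \<Sum>i<d. w i * U i x)"
proof -
  define M where "M = uniform_measure lborel {0..1::real}"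
  define U where "U = (\<lambda>(i::nat) (x::real). if i = 0 then x else 1 - x)"
  define b where "b = (\<Sum>i\<in>{1..<d}. w i)"
  note W = wfacts[OF d wpos wmax big b_def]
  have P: "prob_space M" unfolding M_def by (rule prob_space_uniform_measure) auto
  have sM[simp]: "space M = UNIV" unfolding M_def by simp
  have setsM[simp, measurable_cong]: "sets M = sets borel" unfolding M_def by simp
  have mM: "\<And>B. B \<in> sets borel \<Longrightarrow> measure M B = measure lborel ({0..1} \<inter> B)"
    unfolding M_def by (subst measure_uniform_measure) auto
  have u0: "unif01 M (\<lambda>x. x)"
  proof (rule unif01I[OF P])
    show "(\<lambda>x. x) \<in> borel_measurable M" by (simp add: measurable_ident_sets)
    fix t :: real assume t: "0 \<le> t" "t \<le> 1"
    have "{x \<in> space M. x \<le> t} = {..t}" by auto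
    moreover have "{0..1} \<inter> {..t} = {0..t::real}" using t by auto
    ultimately show "measure M {x \<in> space M. x \<le> t} = t" using mM[of "{..t}"] t by simp
  qed
  have u1: "unif01 M (\<lambda>x. 1 - x)"
  proof (rule unif01I[OF P])
    show "(\<lambda>x. 1 - x) \<in> borel_measurable M" by measurable
    fix t :: real assume t: "0 \<le> t" "t \<le> 1"
    have "{x \<in> space M. 1 - x \<le> t} = {1-t..}" by auto
    moreover have "{0..1} \<inter> {1-t..} = {1-t..1::real}" using t by auto
    ultimately show "measure M {x \<in> space M. 1 - x \<le> t} = t" using mM[of "{1-t..}"] t by simp
  qed
  have U: "\<forall>i<d. unif01 M (U i)"
  proof (intro allI impI)
    fix i assume "i < d"
    show "unif01 M (U i)"
    proof (cases "i = 0")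
      case True
      then have "U i = (\<lambda>x. x)" unfolding U_def by auto
      then show ?thesis using u0 by simp
    next
      case False
      then have "U i = (\<lambda>x. 1 - x)" unfolding U_def by auto
      then show ?thesis using u1 by simp
    qed
  qed
  have CM: "is_CM M d (wstar d w) U"
  proof -
    have "\<And>x. (\<Sum>i<d. wstar d w i * U i x) = 1 / 2 * (\<Sum>i<d. wstar d w i)"
    proof -
      fix x :: real
      have "(\<Sum>i\<in>{1..<d}. w i * U i x) = (\<Sum>i\<in>{1..<d}. w i * (1 - x))"
        unfolding U_def by (intro sum.cong) auto
      also have "\<dots> = b * (1 - x)" unfolding b_def by (simp add: sum_distrib_right)
      finally show "(\<Sum>i<d. wstar d w i * U i x) = 1 / 2 * (\<Sum>i<d. wstar d w i)"
        unfolding W(7) W(8) by (simp add: U_def algebra_simps)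
    qed
    then have "{x \<in> space M. (\<Sum>i<d. wstar d w i * U i x) = 1 / 2 * (\<Sum>i<d. wstar d w i)} = space M"
      by auto
    then show ?thesis unfolding is_CM_def using prob_space.prob_space[OF P] by simp
  qed
  have "l_fun d w = prob_space.variance M (\<lambda>x. \<Sum>i<d. w i * U i x)"
    using part1[OF d wpos wmax big P U] CM by simp
  then show ?thesis using P U by blast
qed

theorem mainTheorem10:
  fixes d :: nat and w :: "nat \<Rightarrow> real"
  assumes "d \<ge> 2"
    and "\<forall>i<d. w i > 0"
    and "\<forall>i<d. w i \<le> w 0"
    and "2 * w 0 > (\<Sum>i<d. w i)"
  shows "(\<forall>(M :: 'a measure) (U :: nat \<Rightarrow> 'a \<Rightarrow> real).
            prob_space M \<and> (\<forall>i<d. unif01 M (U i)) \<longrightarrow>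
              l_fun d w \<le> prob_space.variance M (\<lambda>x. \<Sum>i<d. w i * U i x) \<and>
              (l_fun d w = prob_space.variance M (\<lambda>x. \<Sum>i<d. w i * U i x)
                 \<longleftrightarrow> is_CM M d (wstar d w) U))
       \<and> (\<exists>(M :: real measure) (U :: nat \<Rightarrow> real \<Rightarrow> real).
            prob_space M \<and> (\<forall>i<d. unif01 M (U i)) \<and>
            l_fun d w = prob_space.variance M (\<lambda>x. \<Sum>i<d. w i * U i x))"
  using part1[OF assms] existence[OF assms] by blast

end
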